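(* Let $N\geq 3$ be prime, $q\in\mathbb{C}$ with $q^N=1$, $q\neq 1$, and let $X\subset\mathbb{R}^d$ be a convex subspace. Let $\tau\in C^q_m(X)$ and $\sigma\in C^q_n(X)$ be singular $q$-chains with $mn>0$. Then $$\partial(\tau*\sigma)=\partial(\tau)*\sigma+q^{m+1}\,\tau*\partial(\sigma).$$
   Context: Singular $q$-chains: $C^q_n(X)$ is the free $\mathbb{Z}[q]$-module with basis the continuous maps $\sigma:\Delta^n\to X$, where $\Delta^n\subset\mathbb{R}^{n+1}$ is the convex hull of the standard basis $e_0,\dots,e_n$. The $j$-th face of an $n$-simplex is $\partial_j\sigma=\sigma\circ\lambda_j$, where $\lambda_j:\Delta^{n-1}\to\Delta^n$ is the affine map sending $e_0,\dots,e_{n-1}$ in order to $e_0,\dots,\widehat{e_j},\dots,e_n$; the border map is $\partial=\sum_{j=0}^n q^j\partial_j$ on $C^q_n(X)$ for $n\geq1$, extended linearly. Convex product: for singular simplices $\tau:\Delta^m\to X$, $\sigma:\Delta^n\to X$, write points of $\Delta^{m+n+1}$ as $(\alpha;\beta)=(\alpha_0,\dots,\alpha_m;\beta_0,\dots,\beta_n)$, $|\alpha|=\sum\alpha_i$, $|\beta|=\sum\beta_j$; then $\tau*\sigma:\Delta^{m+n+1}\to X$ is $\tau(\alpha)$ if $|\beta|=0$, $\sigma(\beta)$ if $|\alpha|=0$, and $|\alpha|\,\tau(\alpha/|\alpha|)+|\beta|\,\sigma(\beta/|\beta|)$ otherwise. This is extended to a bilinear map $C^q_m(X)\times C^q_n(X)\to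 C^q_{m+n+1}(X)$. *)

theory Defs
  imports "HOL-Homology.Homology" "HOL-Library.Poly_Mapping" "HOL-Computational_Algebra.Primes"
begin

text \<open>Points of the standard n-simplex are functions nat => real (coordinates 0..n),
  singular simplices are as in HOL-Homology (continuous, extensional on the simplex).\<close>

type_synonym 'a qchain = "((nat \<Rightarrow> real) \<Rightarrow> 'a) \<Rightarrow>\<^sub>0 complex"

definition Zq :: "complex \<Rightarrow> complex set" where
  "Zq q = {z. \<exists>(f::nat \<Rightarrow> int) k. z = (\<Sum>i<k. of_int (f i) * q ^ i)}"

definition qchains :: "complex \<Rightarrow> nat \<Rightarrow> 'a topology \<Rightarrow> 'a qchain set" where
  "qchains q n X = {c. (\<forall>s \<in> Poly_Mapping.keys c. singular_simplex n X s)
                      \<and> (\<forall>s. Poly_Mapping.lookup c s \<in> Zq q)}"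

definition qborder :: "complex \<Rightarrow> nat \<Rightarrow> 'a qchain \<Rightarrow> 'a qchain" where
  "qborder q n c = (\<Sum>s\<in>Poly_Mapping.keys c. \<Sum>j\<le>n.
      Poly_Mapping.single (singular_face n j s) (q ^ j * Poly_Mapping.lookup c s))"

definition convex_join :: "nat \<Rightarrow> nat \<Rightarrow> ((nat \<Rightarrow> real) \<Rightarrow> 'a::real_vector)
      \<Rightarrow> ((nat \<Rightarrow> real) \<Rightarrow> 'a) \<Rightarrow> (nat \<Rightarrow> real) \<Rightarrow> 'a" where
  "convex_join m n t s = restrict (\<lambda>x.
      let alpha = (\<lambda>i. if i \<le> m then x i else 0);
          beta = (\<lambda>j. if j \<le> n then x (m + 1 + j) else 0);
          a = (\<Sum>i\<le>m. x i);
          b = (\<Sum>j\<le>n. x (m + 1 + j))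
      in if b = 0 then t alpha
         else if a = 0 then s beta
         else a *\<^sub>R t (\<lambda>i. alpha i / a) + b *\<^sub>R s (\<lambda>j. beta j / b))
    (standard_simplex (m + n + 1))"

definition qjoin :: "nat \<Rightarrow> nat \<Rightarrow> ('a::real_vector) qchain \<Rightarrow> 'a qchain \<Rightarrow> 'a qchain" where
  "qjoin m n c d = (\<Sum>t\<in>Poly_Mapping.keys c. \<Sum>s\<in>Poly_Mapping.keys d.
      Poly_Mapping.single (convex_join m n t s) (Poly_Mapping.lookup c t * Poly_Mapping.lookup d s))"

end

theory Submission imports Defs begin

lemma sum_split_nat:
  fixes f :: "nat \<Rightarrow> 'x::comm_monoid_add"
  shows "sum f {..a+b+1} = sum f {..a} + (\<Sum>k\<le>b. f (a+1+k))"
  by (induction b) (simp_all add: add.assoc)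

lemma trunc_in_simplex:
  assumes "\<And>i. 0 \<le> x i" "(\<Sum>i\<le>p. x i) = a" "a > 0"
  shows "(\<lambda>i. (if i \<le> p then x i else 0) / a) \<in> standard_simplex p"
proof -
  have le: "x i \<le> a" if "i \<le> p" for i
    using member_le_sum[of i "{..p}" x] assms that by auto
  have "(\<Sum>i\<le>p. (if i \<le> p then x i else 0) / a) = (\<Sum>i\<le>p. x i) / a"
    by (simp add: sum_divide_distrib)
  then show ?thesis using assms le
    by (auto simp: standard_simplex_def divide_le_eq_1)
qed

lemma trunc_in_simplex1:
  assumes "\<And>i. 0 \<le> x i" "(\<Sum>i\<le>p. x i) = 1"
  shows "(\<lambda>i. (if i \<le> p then x i else 0)) \<in> standard_simplex p"
  using trunc_in_simplex[OF assms] by simp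


lemma face_join1:
  assumes "1 \<le> m" "j \<le> m"
  shows "singular_face (m+n+1) j (convex_join m n t s) = convex_join (m-1) n (singular_face m j t) s"
proof
  fix x
  have e1: "m + n + 1 - Suc 0 = m + n" "m - 1 + n + 1 = m + n" "m - 1 + 1 = m" "Suc (m - Suc 0 + n) = m + n" "Suc (m - Suc 0) = m" "m - Suc 0 + 1 = m" using assms by auto
  show "singular_face (m+n+1) j (convex_join m n t s) x = convex_join (m-1) n (singular_face m j t) s x"
  proof (cases "x \<in> standard_simplex (m+n)")
    case False
    then show ?thesis by (simp add: singular_face_def convex_join_def e1)
  next
    case True
    define y where "y = simplical_face j x"
    have y: "y \<in> standard_simplex (m+n+1)"
      using simplical_face_in_standard_simplex[of "m+n+1" j x] True assms unfolding y_def by simp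
    have x0: "\<And>i. 0 \<le> x i" using True by (simp add: standard_simplex_def)
    have bb: "(\<Sum>k\<le>n. y (m+1+k)) = (\<Sum>k\<le>n. x (m+k))"
      using assms by (auto simp: y_def simplical_face_def intro!: sum.cong)
    have ty: "(\<Sum>i\<le>m+n+1. y i) = 1" using y by (simp add: standard_simplex_def)
    have tx: "(\<Sum>i\<le>m-1+n+1. x i) = 1" using True e1 by (simp add: standard_simplex_def)
    have ay: "(\<Sum>i\<le>m. y i) = 1 - (\<Sum>k\<le>n. x (m+k))"
      using ty sum_split_nat[of y m n] bb by simp
    have ax: "(\<Sum>i\<le>m-1. x i) = 1 - (\<Sum>k\<le>n. x (m+k))"
      using tx sum_split_nat[of x "m-1" n] e1 by simp
    have fa: "simplical_face j (\<lambda>i. (if i \<le> m-1 then x i else 0) / c) = (\<lambda>i. (if i \<le> m then y i else 0) / c)" for c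
      using assms by (auto simp: y_def simplical_face_def fun_eq_iff)
    have fa1: "simplical_face j (\<lambda>i. (if i \<le> m-1 then x i else 0)) = (\<lambda>i. (if i \<le> m then y i else 0))"
      using fa[of 1] by simp
    have fb: "(\<lambda>k. (if k \<le> n then y (m+1+k) else 0) / c) = (\<lambda>k. (if k \<le> n then x (m - Suc 0 + 1 + k) else 0) / c)" for c
      using assms by (auto simp: y_def simplical_face_def fun_eq_iff)
    have fb1: "(\<lambda>k. (if k \<le> n then y (m+1+k) else 0)) = (\<lambda>k. (if k \<le> n then x (m - Suc 0 + 1 + k) else 0))"
      using fb[of 1] by simp
    show ?thesis
    proof (cases "(\<Sum>k\<le>n. x (m+k)) = 0")
      case b0: True
      have "(\<lambda>i. (if i \<le> m-1 then x i else 0)) \<in> standard_simplex (m-1)"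
        using trunc_in_simplex1[of x "m-1"] x0 ax b0 by simp
      then show ?thesis using fb1 fb y True b0 bb e1 fa1
        by (simp add: singular_face_def convex_join_def Let_def y_def[symmetric])
    next
      case b1: False
      show ?thesis
      proof (cases "(\<Sum>i\<le>m-1. x i) = 0")
        case a0: True
        then show ?thesis using fb1 fb y True b1 bb e1 ax ay
          by (simp add: singular_face_def convex_join_def Let_def y_def[symmetric])
      next
        case a1: False
        have "(\<Sum>i\<le>m-1. x i) > 0" using a1 x0 sum_nonneg[of "{..m-1}" x]
          by (metis less_eq_real_def)
        then have "(\<lambda>i. (if i \<le> m-1 then x i else 0) / (\<Sum>i\<le>m-1. x i)) \<in> standard_simplex (m-1)"
          using trunc_in_simplex[of x "m-1"] x0 by simp
        then show ?thesis using fb1 fb y True b1 a1 bb e1 ax ay fa[of "(\<Sum>i\<le>m-1. x i)"]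
          by (simp add: singular_face_def convex_join_def Let_def y_def[symmetric])
      qed
    qed
  qed
qed

lemma face_join2:
  assumes "1 \<le> n" "k \<le> n"
  shows "singular_face (m+n+1) (m+1+k) (convex_join m n t s) = convex_join m (n-1) t (singular_face n k s)"
proof
  fix x
  have e1: "m + n + 1 - Suc 0 = m + n" "m + (n - 1) + 1 = m + n" "Suc (m + (n - Suc 0)) = m + n"
     "Suc (n - Suc 0) = n" "m + (n - Suc 0) + 1 = m + n" using assms by auto
  show "singular_face (m+n+1) (m+1+k) (convex_join m n t s) x = convex_join m (n-1) t (singular_face n k s) x"
  proof (cases "x \<in> standard_simplex (m+n)")
    case False
    then show ?thesis by (simp add: singular_face_def convex_join_def e1)
  next
    case True
    define y where "y = simplical_face (Suc (m+k)) x"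
    have y: "y \<in> standard_simplex (m+n+1)"
      using simplical_face_in_standard_simplex[of "m+n+1" "m+1+k" x] True assms unfolding y_def by simp
    have x0: "\<And>i. 0 \<le> x i" using True by (simp add: standard_simplex_def)
    have aa: "(\<Sum>i\<le>m. y i) = (\<Sum>i\<le>m. x i)"
      using assms by (auto simp: y_def simplical_face_def intro!: sum.cong)
    have ty: "(\<Sum>i\<le>m+n+1. y i) = 1" using y by (simp add: standard_simplex_def)
    have tx: "(\<Sum>i\<le>m+(n-1)+1. x i) = 1" using True e1 by (simp add: standard_simplex_def)
    have by': "(\<Sum>j\<le>n. y (m+1+j)) = 1 - (\<Sum>i\<le>m. x i)"
      using ty sum_split_nat[of y m n] aa by simp
    have bx: "(\<Sum>j\<le>n-1. x (m+1+j)) = 1 - (\<Sum>i\<le>m. x i)"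
      using tx sum_split_nat[of x m "n-1"] e1 by simp
    have fa: "(\<lambda>i. (if i \<le> m then y i else 0) / c) = (\<lambda>i. (if i \<le> m then x i else 0) / c)" for c
      using assms by (auto simp: y_def simplical_face_def fun_eq_iff)
    have fa1: "(\<lambda>i. (if i \<le> m then y i else 0)) = (\<lambda>i. (if i \<le> m then x i else 0))"
      using fa[of 1] by simp
    have fb: "simplical_face k (\<lambda>j. (if j \<le> n - Suc 0 then x (m+1+j) else 0) / c) = (\<lambda>j. (if j \<le> n then y (m+1+j) else 0) / c)" for c
      using assms by (auto simp: y_def simplical_face_def fun_eq_iff)
    have fb1: "simplical_face k (\<lambda>j. (if j \<le> n - Suc 0 then x (m+1+j) else 0)) = (\<lambda>j. (if j \<le> n then y (m+1+j) else 0))"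
      using fb[of 1] by simp
    have bxs: "(\<lambda>j. if j \<le> n - Suc 0 then x (m+1+j) else 0) = (\<lambda>j. if j \<le> n - Suc 0 then (\<lambda>i. x (m+1+i)) j else 0)"
      by simp
    have x1: "\<And>i. 0 \<le> x (m+1+i)" using x0 by simp
    show ?thesis
    proof (cases "(\<Sum>i\<le>m. x i) = 0")
      case a0: True
      have "(\<lambda>j. (if j \<le> n - Suc 0 then x (m+1+j) else 0)) \<in> standard_simplex (n-1)"
        using trunc_in_simplex1[of "\<lambda>i. x (m+1+i)" "n-1", OF x1] a0 bx by simp
      then show ?thesis using fa fa1 fb fb1 y True a0 aa by' bx e1
        by (simp add: singular_face_def convex_join_def Let_def y_def[symmetric])
    next
      case a1: False
      show ?thesis
      proof (cases "(\<Sum>i\<le>m. x i) = 1")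
        case b0: True
        then show ?thesis using fa fa1 fb fb1 y True aa by' bx e1
          by (simp add: singular_face_def convex_join_def Let_def y_def[symmetric])
      next
        case b1: False
        have "(\<Sum>j\<le>n-1. x (m+1+j)) \<noteq> 0" using bx b1 by simp
        then have "(\<Sum>j\<le>n-1. x (m+1+j)) > 0" using x0 sum_nonneg[of "{..n-1}" "\<lambda>j. x (m+1+j)"]
          by (metis less_eq_real_def)
        then have "(\<lambda>j. (if j \<le> n-1 then x (m+1+j) else 0) / (\<Sum>j\<le>n-1. x (m+1+j))) \<in> standard_simplex (n-1)"
          using trunc_in_simplex[of "\<lambda>i. x (m+1+i)" "n-1", OF x1] by simp
        then show ?thesis using fa fa1 fb fb1 y True a1 b1 aa by' bx e1
          by (simp add: singular_face_def convex_join_def Let_def y_def[symmetric])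
      qed
    qed
  qed
qed

definition lext :: "('k \<Rightarrow> 'v::zero \<Rightarrow> 'p::comm_monoid_add) \<Rightarrow> ('k \<Rightarrow>\<^sub>0 'v) \<Rightarrow> 'p" where
  "lext F c = (\<Sum>s\<in>Poly_Mapping.keys c. F s (Poly_Mapping.lookup c s))"

lemma lext_superset:
  assumes "finite S" "Poly_Mapping.keys c \<subseteq> S" "\<And>s. F s 0 = 0"
  shows "lext F c = (\<Sum>s\<in>S. F s (Poly_Mapping.lookup c s))"
  unfolding lext_def using assms
  by (intro sum.mono_neutral_left) (auto simp: in_keys_iff)

lemma lext_add:
  assumes "\<And>s a b. F s (a+b) = F s a + F s b" "\<And>s. F s 0 = 0"
  shows "lext F (c+d) = lext F c + lext F d"
proof -
  let ?S = "Poly_Mapping.keys c \<union> Poly_Mapping.keys d"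
  have "lext F (c+d) = (\<Sum>s\<in>?S. F s (Poly_Mapping.lookup (c+d) s))"
    using keys_add[of c d] assms by (intro lext_superset) auto
  also have "\<dots> = (\<Sum>s\<in>?S. F s (Poly_Mapping.lookup c s)) + (\<Sum>s\<in>?S. F s (Poly_Mapping.lookup d s))"
    by (simp add: lookup_add assms(1) sum.distrib)
  also have "\<dots> = lext F c + lext F d"
    using assms by (simp add: lext_superset[symmetric])
  finally show ?thesis .
qed

lemma lext_zero: "lext F 0 = 0" by (simp add: lext_def)

lemma lext_sum:
  assumes "\<And>s a b. F s (a+b) = F s a + F s b" "\<And>s. F s 0 = 0"
  shows "lext F (\<Sum>i\<in>I. p i) = (\<Sum>i\<in>I. lext F (p i))"
  by (induction I rule: infinite_finite_induct) (simp_all add: lext_zero lext_add[OF assms])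

lemma lext_single:
  assumes "\<And>s. F s 0 = 0"
  shows "lext F (Poly_Mapping.single k a) = F k a"
  using assms by (simp add: lext_def)

lemma lookup_map_mult: "Poly_Mapping.lookup (Poly_Mapping.map (\<lambda>z. (c::complex) * z) p) k = c * Poly_Mapping.lookup p k"
  by (simp add: Poly_Mapping.map.rep_eq when_def)

lemma map_mult_sum:
  "Poly_Mapping.map (\<lambda>z. (c::complex) * z) (\<Sum>i\<in>I. p i) = (\<Sum>i\<in>I. Poly_Mapping.map (\<lambda>z. c * z) (p i))"
  by (rule poly_mapping_eqI) (simp add: lookup_map_mult lookup_sum sum_distrib_left)

lemma qborder_lext: "qborder q n c = lext (\<lambda>s a. \<Sum>j\<le>n. Poly_Mapping.single (singular_face n j s) (q ^ j * a)) c"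
  by (simp add: qborder_def lext_def)

lemma qjoin_lext: "qjoin m n c d = lext (\<lambda>t a. \<Sum>s\<in>Poly_Mapping.keys d. Poly_Mapping.single (convex_join m n t s) (a * Poly_Mapping.lookup d s)) c"
  by (simp add: qjoin_def lext_def)

lemma qjoin_inner: "(\<Sum>s\<in>Poly_Mapping.keys d. Poly_Mapping.single (convex_join m n t s) (a * Poly_Mapping.lookup d s))
   = lext (\<lambda>s b. Poly_Mapping.single (convex_join m n t s) (a * b)) d"
  by (simp add: lext_def)

lemma addB: "(\<Sum>j\<le>n. Poly_Mapping.single (g j) ((q::complex) ^ j * (a + b))) = (\<Sum>j\<le>n. Poly_Mapping.single (g j) (q ^ j * a)) + (\<Sum>j\<le>n. Poly_Mapping.single (g j) (q ^ j * b))"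
  by (simp add: distrib_left single_add sum.distrib)

lemma addJ: "(\<Sum>s\<in>S. Poly_Mapping.single (g s) ((a + b) * (h s::complex))) = (\<Sum>s\<in>S. Poly_Mapping.single (g s) (a * h s)) + (\<Sum>s\<in>S. Poly_Mapping.single (g s) (b * h s))"
  by (simp add: distrib_right single_add sum.distrib)

theorem lemma4p2:
  fixes N :: nat and q :: complex and X :: "(real ^ 'd) set"
    and tau sigma :: "(real ^ 'd) qchain" and m n :: nat
  assumes "prime N" and "N \<ge> 3"
    and "q ^ N = 1" and "q \<noteq> 1"
    and "convex X"
    and "tau \<in> qchains q m (top_of_set X)"
    and "sigma \<in> qchains q n (top_of_set X)"
    and "m * n > 0"
  shows "qborder q (m + n + 1) (qjoin m n tau sigma)
       = qjoin (m - 1) n (qborder q m tau) sigma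
         + Poly_Mapping.map (\<lambda>z. q ^ (m + 1) * z) (qjoin m (n - 1) tau (qborder q n sigma))"
proof -
  have mn: "1 \<le> m" "1 \<le> n" using assms(8) by (auto simp: nat_0_less_mult_iff)
  have F1: "\<And>j t s. j \<le> m \<Longrightarrow> singular_face (Suc (m+n)) j (convex_join m n t s) = convex_join (m - Suc 0) n (singular_face m j t) s"
    using face_join1[OF mn(1)] by simp
  have F2: "\<And>k t s. k \<le> n \<Longrightarrow> singular_face (Suc (m+n)) (Suc (m+k)) (convex_join m n t s) = convex_join m (n - Suc 0) t (singular_face n k s)"
    using face_join2[OF mn(2)] by simp
  define K1 where "K1 = Poly_Mapping.keys tau"
  define K2 where "K2 = Poly_Mapping.keys sigma"
  define ta where "ta = Poly_Mapping.lookup tau"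
  define si where "si = Poly_Mapping.lookup sigma"
  define B where "B = (\<lambda>(s::(nat \<Rightarrow> real) \<Rightarrow> real^'d) (a::complex). \<Sum>j\<le>m+n+1. Poly_Mapping.single (singular_face (m+n+1) j s) (q ^ j * a))"
  have B: "\<And>s a b. B s (a+b) = B s a + B s b" "\<And>s. B s 0 = 0" unfolding B_def by (simp_all add: addB)
  define J where "J = (\<lambda>t a. \<Sum>s\<in>K2. Poly_Mapping.single (convex_join (m-1) n t s) (a * si s))"
  have J: "\<And>s a b. J s (a+b) = J s a + J s b" "\<And>s. J s 0 = 0" unfolding J_def by (simp_all add: addJ)
  define C where "C = (\<lambda>t s b. Poly_Mapping.single (convex_join m (n-1) t s) (ta t * b))"
  have C: "\<And>t s a b. C t s (a+b) = C t s a + C t s b" "\<And>t s. C t s 0 = 0"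
    unfolding C_def by (simp_all add: distrib_left single_add)
  have "qborder q (m + n + 1) (qjoin m n tau sigma) = lext B (qjoin m n tau sigma)"
    unfolding B_def qborder_lext ..
  also have "\<dots> = (\<Sum>t\<in>K1. \<Sum>s\<in>K2. B (convex_join m n t s) (ta t * si s))"
    unfolding qjoin_def K1_def K2_def ta_def si_def
    by (simp add: lext_sum[where F=B, OF B] lext_single[where F=B, OF B(2)])
  also have "\<dots> = (\<Sum>t\<in>K1. \<Sum>s\<in>K2.
       (\<Sum>j\<le>m. Poly_Mapping.single (convex_join (m-1) n (singular_face m j t) s) (q ^ j * (ta t * si s)))
     + (\<Sum>k\<le>n. Poly_Mapping.single (convex_join m (n-1) t (singular_face n k s)) (q ^ (m+1+k) * (ta t * si s))))"
    unfolding B_def sum_split_nat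
    by (intro sum.cong refl arg_cong2[where f="(+)"]) (simp_all add: F1 F2)
  also have "\<dots> = (\<Sum>t\<in>K1. \<Sum>s\<in>K2.
       (\<Sum>j\<le>m. Poly_Mapping.single (convex_join (m-1) n (singular_face m j t) s) (q ^ j * ta t * si s)))
     + (\<Sum>t\<in>K1. \<Sum>s\<in>K2. (\<Sum>k\<le>n. Poly_Mapping.single (convex_join m (n-1) t (singular_face n k s)) (q ^ (m+1) * (ta t * (q ^ k * si s)))))"
    by (simp add: sum.distrib power_add mult.assoc mult.left_commute)
  also have "(\<Sum>t\<in>K1. \<Sum>s\<in>K2.
       (\<Sum>j\<le>m. Poly_Mapping.single (convex_join (m-1) n (singular_face m j t) s) (q ^ j * ta t * si s)))
      = qjoin (m - 1) n (qborder q m tau) sigma"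
  proof -
    have "qjoin (m - 1) n (qborder q m tau) sigma = lext J (qborder q m tau)"
      unfolding qjoin_lext J_def K2_def si_def ..
    also have "\<dots> = (\<Sum>t\<in>K1. \<Sum>j\<le>m. J (singular_face m j t) (q ^ j * ta t))"
      unfolding qborder_def K1_def ta_def
      by (simp add: lext_sum[where F=J, OF J] lext_single[where F=J, OF J(2)])
    also have "\<dots> = (\<Sum>t\<in>K1. \<Sum>s\<in>K2.
       (\<Sum>j\<le>m. Poly_Mapping.single (convex_join (m-1) n (singular_face m j t) s) (q ^ j * ta t * si s)))"
      unfolding J_def by (simp add: sum.swap[of _ "{..m}"])
    finally show ?thesis by simp
  qed
  also have "(\<Sum>t\<in>K1. \<Sum>s\<in>K2. (\<Sum>k\<le>n. Poly_Mapping.single (convex_join m (n-1) t (singular_face n k s)) (q ^ (m+1) * (ta t * (q ^ k * si s)))))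
     = Poly_Mapping.map (\<lambda>z. q ^ (m + 1) * z) (qjoin m (n - 1) tau (qborder q n sigma))"
  proof -
    have "qjoin m (n - 1) tau (qborder q n sigma) = (\<Sum>t\<in>K1. lext (C t) (qborder q n sigma))"
      unfolding qjoin_def qjoin_inner C_def K1_def ta_def ..
    also have "\<dots> = (\<Sum>t\<in>K1. \<Sum>s\<in>K2. \<Sum>k\<le>n. C t (singular_face n k s) (q ^ k * si s))"
      unfolding qborder_def K2_def si_def
      by (simp add: lext_sum[where F="C t" for t, OF C(1,2)] lext_single[where F="C t" for t, OF C(2)])
    finally show ?thesis
      by (simp add: map_mult_sum C_def)
  qed
  finally show ?thesis .
qed

end
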